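(* Let $M_{pq}=(W,V_{pq})$ be the inquisitive model with $W=\{w_1,w_2,w_3\}$, $V_{pq}(w_1)=\{p\}$, $V_{pq}(w_2)=\{q\}$, $V_{pq}(w_3)=\emptyset$, where $p,q$ are distinct propositional letters. Let $\varphi(a,b)$ be a formula of $\textsf{INQ}^-$ (with $a,b$ propositional letters) in which $p$ and $q$ do not occur, and let $\varphi(?p,?q)$ denote the result of replacing every occurrence of $a$ by $?p$ and every occurrence of $b$ by $?q$. If $\varphi(?p,?q)\not\equiv_{M_{pq}}\bot$, then $\{w_i\}\models\varphi(?p,?q)$ in $M_{pq}$ for each $i=1,2,3$.
   Context: $\textsf{INQ}^-$ is the propositional language built from countably many propositional letters using the 0-ary connectives $\bot,\top$, the unary connectives $\neg,?$ and the binary connectives $\land$, $\vee$ (inquisitive/global disjunction) and $\otimes$ (tensor). A model is a pair $M=(W,V)$ with $W$ a set of worlds and $V$ assigning to each world a set of propositional letters. Support at a state $s\subseteq W$ is defined by: $s\models p$ iff $p\in V(w)$ for all $w\in s$; $s\models\bot$ iff $s=\emptyset$; $s\models\top$ always; $s\models\psi\land\chi$ iff $s\models\psi$ and $s\models\chi$; $s\models\psi\vee\chi$ iff $s\models\psi$ or $s\models\chi$; $s\models\psi\otimes\chi$ iff there are $t_1,t_2$ with $t_1\models\psi$, $t_2\models\chi$ and $s=t_1\cup t_2$; $s\models\neg\psi$ iff $t\not\models\psi$ for all nonempty... precisely: iff for all $t\subseteq s$, $t\models\psi$ implies $t=\emptyset$; $s\models ?\psi$ iff $s\models\psi$ or $s\models\neg\psi$.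 Two formulas are equivalent in $M$ ($\psi\equiv_M\chi$) if they are supported by exactly the same states of $M$. *)

theory Defs
  imports Main
begin

datatype form =
    Atom nat
  | Bot
  | Top
  | Neg form
  | Quest form
  | Conj form form
  | IDisj form form
  | Tensor form form

fun supp :: "('w set \<times> ('w \<Rightarrow> nat set)) \<Rightarrow> 'w set \<Rightarrow> form \<Rightarrow> bool" where
  "supp M s (Atom p) = (\<forall>w\<in>s. p \<in> snd M w)"
| "supp M s Bot = (s = {})"
| "supp M s Top = True"
| "supp M s (Conj \<psi> \<chi>) = (supp M s \<psi> \<and> supp M s \<chi>)"
| "supp M s (IDisj \<psi> \<chi>) = (supp M s \<psi> \<or> supp M s \<chi>)"
| "supp M s (Tensor \<psi> \<chi>) =
     (\<exists>t1 t2. supp M t1 \<psi> \<and> supp M t2 \<chi> \<and> s = t1 \<union> t2)"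
| "supp M s (Neg \<psi>) = (\<forall>t. t \<subseteq> s \<longrightarrow> supp M t \<psi> \<longrightarrow> t = {})"
| "supp M s (Quest \<psi>) = (supp M s \<psi> \<or> (\<forall>t. t \<subseteq> s \<longrightarrow> supp M t \<psi> \<longrightarrow> t = {}))"

definition equiv_in :: "('w set \<times> ('w \<Rightarrow> nat set)) \<Rightarrow> form \<Rightarrow> form \<Rightarrow> bool" where
  "equiv_in M \<psi> \<chi> = (\<forall>s. s \<subseteq> fst M \<longrightarrow> (supp M s \<psi> = supp M s \<chi>))"

fun letters :: "form \<Rightarrow> nat set" where
  "letters (Atom p) = {p}"
| "letters Bot = {}"
| "letters Top = {}"
| "letters (Neg \<psi>) = letters \<psi>"
| "letters (Quest \<psi>) = letters \<psi>"
| "letters (Conj \<psi> \<chi>) = letters \<psi> \<union> letters \<chi>"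
| "letters (IDisj \<psi> \<chi>) = letters \<psi> \<union> letters \<chi>"
| "letters (Tensor \<psi> \<chi>) = letters \<psi> \<union> letters \<chi>"

fun subst :: "(nat \<Rightarrow> form) \<Rightarrow> form \<Rightarrow> form" where
  "subst \<sigma> (Atom p) = \<sigma> p"
| "subst \<sigma> Bot = Bot"
| "subst \<sigma> Top = Top"
| "subst \<sigma> (Neg \<psi>) = Neg (subst \<sigma> \<psi>)"
| "subst \<sigma> (Quest \<psi>) = Quest (subst \<sigma> \<psi>)"
| "subst \<sigma> (Conj \<psi> \<chi>) = Conj (subst \<sigma> \<psi>) (subst \<sigma> \<chi>)"
| "subst \<sigma> (IDisj \<psi> \<chi>) = IDisj (subst \<sigma> \<psi>) (subst \<sigma> \<chi>)"
| "subst \<sigma> (Tensor \<psi> \<chi>) = Tensor (subst \<sigma> \<psi>) (subst \<sigma> \<chi>)"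

datatype world = w1 | w2 | w3

definition Mpq :: "nat \<Rightarrow> nat \<Rightarrow> world set \<times> (world \<Rightarrow> nat set)" where
  "Mpq p q = (UNIV, (\<lambda>w. case w of w1 \<Rightarrow> {p} | w2 \<Rightarrow> {q} | w3 \<Rightarrow> {}))"

end

theory Submission
  imports Defs
begin

lemma supp_empty: "supp M {} \<psi>"
  by (induction \<psi>) auto

lemma main_inv:
  fixes p q a b :: nat and \<phi> :: form
  assumes "p \<notin> letters \<phi>" and "q \<notin> letters \<phi>"
  defines "\<sigma> \<equiv> (\<lambda>x. Atom x)(a := Quest (Atom p), b := Quest (Atom q))"
  shows "(\<forall>s. supp (Mpq p q) s (subst \<sigma> \<phi>) \<longleftrightarrow> s = {})
         \<or> (\<forall>w. supp (Mpq p q) {w} (subst \<sigma> \<phi>))"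
  using assms(1,2)
proof (induction \<phi>)
  case (Atom x)
  show ?case
  proof (cases "x = a \<or> x = b")
    case True
    have "supp (Mpq p q) {w} (Quest (Atom r))" for w r
      by (auto simp: subset_singleton_iff)
    then show ?thesis using True unfolding \<sigma>_def by auto
  next
    case False
    then have "\<sigma> x = Atom x" unfolding \<sigma>_def by auto
    moreover have "x \<noteq> p" "x \<noteq> q" using Atom.prems by auto
    ultimately show ?thesis
      by (auto simp: Mpq_def split: world.splits) (metis world.exhaust)+
  qed
next
  case Bot then show ?case by simp
next
  case Top then show ?case by simp
next
  case (Neg \<psi>)
  then have IH: "(\<forall>s. supp (Mpq p q) s (subst \<sigma> \<psi>) \<longleftrightarrow> s = {})
         \<or> (\<forall>w. supp (Mpq p q) {w} (subst \<sigma> \<psi>))" by simp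
  then show ?case
  proof
    assume h: "\<forall>s. supp (Mpq p q) s (subst \<sigma> \<psi>) \<longleftrightarrow> s = {}"
    show ?thesis by (rule disjI2) (simp add: h)
  next
    assume h: "\<forall>w. supp (Mpq p q) {w} (subst \<sigma> \<psi>)"
    have "supp (Mpq p q) s (subst \<sigma> (Neg \<psi>)) \<longleftrightarrow> s = {}" for s
    proof
      assume n: "supp (Mpq p q) s (subst \<sigma> (Neg \<psi>))"
      show "s = {}"
      proof (rule ccontr)
        assume "s \<noteq> {}" then obtain w where "w \<in> s" by auto
        with n h show False by auto
      qed
    qed auto
    then show ?thesis by blast
  qed
next
  case (Quest \<psi>)
  then have IH: "(\<forall>s. supp (Mpq p q) s (subst \<sigma> \<psi>) \<longleftrightarrow> s = {})
         \<or> (\<forall>w. supp (Mpq p q) {w} (subst \<sigma> \<psi>))" by simp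
  then show ?case by (auto simp: subset_singleton_iff)
next
  case (Conj \<psi> \<chi>)
  then have IH1: "(\<forall>s. supp (Mpq p q) s (subst \<sigma> \<psi>) \<longleftrightarrow> s = {})
         \<or> (\<forall>w. supp (Mpq p q) {w} (subst \<sigma> \<psi>))"
   and IH2: "(\<forall>s. supp (Mpq p q) s (subst \<sigma> \<chi>) \<longleftrightarrow> s = {})
         \<or> (\<forall>w. supp (Mpq p q) {w} (subst \<sigma> \<chi>))" by simp_all
  then show ?case by (auto simp: supp_empty)
next
  case (IDisj \<psi> \<chi>)
  then have IH1: "(\<forall>s. supp (Mpq p q) s (subst \<sigma> \<psi>) \<longleftrightarrow> s = {})
         \<or> (\<forall>w. supp (Mpq p q) {w} (subst \<sigma> \<psi>))"
   and IH2: "(\<forall>s. supp (Mpq p q) s (subst \<sigma> \<chi>) \<longleftrightarrow> s = {})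
         \<or> (\<forall>w. supp (Mpq p q) {w} (subst \<sigma> \<chi>))" by simp_all
  then show ?case by (auto simp: supp_empty)
next
  case (Tensor \<psi> \<chi>)
  then have IH1: "(\<forall>s. supp (Mpq p q) s (subst \<sigma> \<psi>) \<longleftrightarrow> s = {})
         \<or> (\<forall>w. supp (Mpq p q) {w} (subst \<sigma> \<psi>))"
   and IH2: "(\<forall>s. supp (Mpq p q) s (subst \<sigma> \<chi>) \<longleftrightarrow> s = {})
         \<or> (\<forall>w. supp (Mpq p q) {w} (subst \<sigma> \<chi>))" by simp_all
  show ?case
  proof (cases "\<forall>w. supp (Mpq p q) {w} (subst \<sigma> \<psi>)")
    case True
    then show ?thesis using supp_empty
      by (metis Un_empty_right subst.simps(8) supp.simps(6))
  next
    case F1: False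
    show ?thesis
    proof (cases "\<forall>w. supp (Mpq p q) {w} (subst \<sigma> \<chi>)")
      case True
      then show ?thesis using supp_empty
        by (metis Un_empty_left subst.simps(8) supp.simps(6))
    next
      case False
      with F1 IH1 IH2 show ?thesis by auto
    qed
  qed
qed

theorem lemma1:
  fixes p q a b :: nat and \<phi> :: form
  assumes "p \<noteq> q" and "a \<noteq> b"
    and "p \<notin> letters \<phi>" and "q \<notin> letters \<phi>"
    and "\<not> equiv_in (Mpq p q)
            (subst ((\<lambda>x. Atom x)(a := Quest (Atom p), b := Quest (Atom q))) \<phi>) Bot"
  shows "\<forall>w. supp (Mpq p q) {w}
            (subst ((\<lambda>x. Atom x)(a := Quest (Atom p), b := Quest (Atom q))) \<phi>)"
  using main_inv[OF assms(3,4), of a b] assms(5)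
  unfolding equiv_in_def by auto

end
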